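(* Let $\mathcal{P}_{XY}$ be a probability distribution over $\mathbb{R}^d\times\{\pm1\}$ with marginal distribution $\mathcal{P}_X$ on $\mathbb{R}^d$, let $\mathcal{B}:\mathbb{R}^d\to\mathscr{P}(\mathbb{R}^d)$ be a perturbation set map, and let $\mathcal{F}$ be a hypothesis space of classifiers $f:\mathbb{R}^d\to\{-1,1\}$. Let $S=\{(x_i,y_i)\}_{i=1}^n$ be a set of $n$ i.i.d. samples drawn from $\mathcal{P}_{XY}$. For any function $f\in\mathcal{F}$, with probability at least $1-\delta$ over the random draw of $S$, \[ R^{0/1}_{\mathcal{B}\text{-robust}}(f)\le \mathbb{E}_{x\sim\mathcal{P}_X}\sup_{x'\in\mathcal{B}(x)}\mathbb{I}\big(f(x')\neq f(x)\big)+\hat{R}^{0/1}(f)+Rad_S(\mathcal{F})+3\sqrt{\frac{\log\frac{2}{\delta}}{2n}}. \]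
   Context: The zero-one loss is $l^{0/1}(y',y)=\mathbb{I}[y'\neq y]$. The expected robust classification risk with zero-one loss is $R^{0/1}_{\mathcal{B}\text{-robust}}(f)=\mathbb{E}_{(x,y)\sim\mathcal{P}_{XY}}\sup_{x'\in\mathcal{B}(x)}\mathbb{I}[f(x')\neq y]$. The empirical classification risk with zero-one loss is $\hat{R}^{0/1}(f)=\frac{1}{n}\sum_{i=1}^n\mathbb{I}[f(x_i)\neq y_i]$. The empirical Rademacher complexity is $Rad_S(\mathcal{F})=\frac{1}{n}\mathbb{E}_{\epsilon}\big[\sup_{f\in\mathcal{F}}\sum_{i=1}^n\epsilon_i f(x_i)\big]$, where $\epsilon_1,\dots,\epsilon_n$ are i.i.d. uniform on $\{1,-1\}$. *)

theory Defs
  imports "HOL-Probability.Probability"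
begin

text \<open>Zero-one loss (labels are the reals -1 and 1).\<close>
definition loss01 :: "real \<Rightarrow> real \<Rightarrow> real" where
  "loss01 y' y = (if y' \<noteq> y then 1 else 0)"

text \<open>Expected robust classification risk with zero-one loss:
  E_{(x,y)~P} sup_{x' in B x} I[f x' ~= y]  (sup over the empty set is 0).\<close>
definition robust_risk01 ::
  "(('d \<times> real) measure) \<Rightarrow> ('d \<Rightarrow> 'd set) \<Rightarrow> ('d \<Rightarrow> real) \<Rightarrow> ennreal" where
  "robust_risk01 P B f =
     (\<integral>\<^sup>+ z. (SUP x'\<in>B (fst z). ennreal (loss01 (f x') (snd z))) \<partial>P)"

definition emp_risk01 :: "nat \<Rightarrow> (nat \<Rightarrow> 'd \<times> real) \<Rightarrow> ('d \<Rightarrow> real) \<Rightarrow> real" where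
  "emp_risk01 n S f = (1 / real n) * (\<Sum>i<n. loss01 (f (fst (S i))) (snd (S i)))"

definition rademacher_emp :: "nat \<Rightarrow> (nat \<Rightarrow> 'd \<times> real) \<Rightarrow> ('d \<Rightarrow> real) set \<Rightarrow> real" where
  "rademacher_emp n S F =
     (1 / real n) * ((1 / 2 ^ n) *
        (\<Sum>\<epsilon>\<in>PiE {..<n} (\<lambda>_. {-1, 1::real}).
            Sup ((\<lambda>f. \<Sum>i<n. \<epsilon> i * f (fst (S i))) ` F)))"

end

theory Submission imports Defs begin

lemma rad_nonneg:
  assumes "\<forall>g\<in>F. \<forall>x. g x \<in> {-1, 1::real}" "f \<in> F"
  shows "rademacher_emp n S F \<ge> 0"
proof -
  let ?E = "PiE {..<n} (\<lambda>_. {-1, 1::real})"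
  let ?h = "\<lambda>\<epsilon>. \<Sum>i<n. \<epsilon> i * f (fst (S i))"
  have fin: "finite ?E" by (intro finite_PiE) auto
  have le: "?h \<epsilon> \<le> Sup ((\<lambda>g. \<Sum>i<n. \<epsilon> i * g (fst (S i))) ` F)" if "\<epsilon> \<in> ?E" for \<epsilon>
  proof (rule cSup_upper)
    show "?h \<epsilon> \<in> (\<lambda>g. \<Sum>i<n. \<epsilon> i * g (fst (S i))) ` F" using assms(2) by blast
    have "(\<Sum>i<n. \<epsilon> i * g (fst (S i))) \<le> real n" if "g \<in> F" for g
    proof -
      have "(\<Sum>i<n. \<epsilon> i * g (fst (S i))) \<le> (\<Sum>i<n. 1)"
      proof (rule sum_mono)
        fix i assume "i \<in> {..<n}"
        then have "\<epsilon> i \<in> {-1,1}" using \<open>\<epsilon> \<in> ?E\<close> by (auto simp: PiE_iff)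
        moreover have "g (fst (S i)) \<in> {-1,1}" using assms(1) \<open>g \<in> F\<close> by blast
        ultimately show "\<epsilon> i * g (fst (S i)) \<le> 1" by auto
      qed
      then show ?thesis by simp
    qed
    then show "bdd_above ((\<lambda>g. \<Sum>i<n. \<epsilon> i * g (fst (S i))) ` F)"
      by (intro bdd_aboveI[where M="real n"]) auto
  qed
  have neg0: "(\<Sum>\<epsilon>\<in>?E. ?h \<epsilon>) = (\<Sum>\<epsilon>\<in>?E. ?h (restrict (\<lambda>i. - \<epsilon> i) {..<n}))"
  apply (rule sum.reindex_bij_witness[where i="\<lambda>\<epsilon>. restrict (\<lambda>i. - \<epsilon> i) {..<n}" and j="\<lambda>\<epsilon>. restrict (\<lambda>i. - \<epsilon> i) {..<n}"])
    subgoal for a by (rule PiE_ext[of _ "{..<n}" "\<lambda>_. {-1,1::real}"]) (auto simp: PiE_iff)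
    subgoal for a by (auto simp: PiE_iff)
    subgoal for a by (rule PiE_ext[of _ "{..<n}" "\<lambda>_. {-1,1::real}"]) (auto simp: PiE_iff)
    subgoal for a by (auto simp: PiE_iff)
    subgoal for a by (intro sum.cong refl) (simp add: PiE_iff)
    done
  have neg: "(\<Sum>\<epsilon>\<in>?E. ?h \<epsilon>) = (\<Sum>\<epsilon>\<in>?E. ?h (\<lambda>i. - \<epsilon> i))"
    unfolding neg0 by (intro sum.cong refl) simp
  have "(\<Sum>\<epsilon>\<in>?E. ?h (\<lambda>i. - \<epsilon> i)) = - (\<Sum>\<epsilon>\<in>?E. ?h \<epsilon>)"
    by (simp add: sum_negf)
  with neg have z: "(\<Sum>\<epsilon>\<in>?E. ?h \<epsilon>) = 0" by linarith
  have "0 \<le> (\<Sum>\<epsilon>\<in>?E. Sup ((\<lambda>g. \<Sum>i<n. \<epsilon> i * g (fst (S i))) ` F))"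
  proof -
    have "(\<Sum>\<epsilon>\<in>?E. ?h \<epsilon>) \<le> (\<Sum>\<epsilon>\<in>?E. Sup ((\<lambda>g. \<Sum>i<n. \<epsilon> i * g (fst (S i))) ` F))"
      by (rule sum_mono[OF le])
    with z show ?thesis by linarith
  qed
  then show ?thesis unfolding rademacher_emp_def by simp
qed


lemma L_meas:
  fixes f :: "(real^'d::finite) \<Rightarrow> real"
  assumes fm: "f \<in> borel_measurable borel"
  shows "(\<lambda>z::(real^'d)\<times>real. loss01 (f (fst z)) (snd z)) \<in> borel_measurable borel"
proof -
  have f1: "(\<lambda>z::(real^'d)\<times>real. f (fst z)) \<in> borel_measurable borel"
    by (rule measurable_compose[OF _ fm]) (intro borel_measurable_continuous_onI continuous_intros)
  have s1: "(\<lambda>z::(real^'d)\<times>real. snd z) \<in> borel_measurable borel"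
    by (intro borel_measurable_continuous_onI continuous_intros)
  have e: "{z \<in> space borel. f (fst z) = snd z} \<in> sets (borel :: ((real^'d)\<times>real) measure)"
    by (rule borel_measurable_eq[OF f1 s1])
  have "(\<lambda>z::(real^'d)\<times>real. loss01 (f (fst z)) (snd z)) = indicator (space borel - {z \<in> space borel. f (fst z) = snd z})"
    by (auto simp: loss01_def fun_eq_iff indicator_def)
  then show ?thesis using e by (simp del: space_borel)
qed

lemma indep_components:
  assumes P: "prob_space P" and I: "I \<noteq> {}"
  shows "prob_space.indep_vars (PiM I (\<lambda>_. P)) (\<lambda>_. P) (\<lambda>i \<omega>. \<omega> i) I"
proof -
  interpret M: prob_space "PiM I (\<lambda>_. P)" by (intro prob_space_PiM P)
  have "distr (PiM I (\<lambda>_. P)) (PiM I (\<lambda>_. P)) (\<lambda>x. \<lambda>i\<in>I. x i) = distr (PiM I (\<lambda>_. P)) (PiM I (\<lambda>_. P)) (\<lambda>x. x)"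
    by (intro distr_cong) (auto simp: space_PiM PiE_def extensional_restrict)
  also have "\<dots> = PiM I (\<lambda>_. P)" by simp
  also have "\<dots> = PiM I (\<lambda>i. distr (PiM I (\<lambda>_. P)) P (\<lambda>\<omega>. \<omega> i))"
    by (intro PiM_cong refl) (rule distr_PiM_component[symmetric], rule P, simp)
  finally show ?thesis
    by (subst M.indep_vars_iff_distr_eq_PiM'[OF I]) auto
qed

theorem theorem1:
  fixes P :: "((real^('d::finite)) \<times> real) measure"
    and B :: "(real^'d) \<Rightarrow> (real^'d) set"
    and F :: "((real^'d) \<Rightarrow> real) set"
    and f :: "(real^'d) \<Rightarrow> real"
    and n :: nat and \<delta> :: real
  assumes "prob_space P"
    and "sets P = sets borel"
    and "AE z in P. snd z \<in> {-1, 1}"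
    and "\<forall>g\<in>F. \<forall>x. g x \<in> {-1, 1}"
    and "f \<in> F"
    and "f \<in> borel_measurable borel"
    and "(\<lambda>z. (SUP x'\<in>B (fst z). ennreal (loss01 (f x') (snd z)))) \<in> borel_measurable borel"
    and "(\<lambda>x. (SUP x'\<in>B x. ennreal (loss01 (f x') (f x)))) \<in> borel_measurable borel"
    and "n > 0"
    and "0 < \<delta>" and "\<delta> < 1"
  shows "\<exists>A \<in> sets (PiM {..<n} (\<lambda>_. P)).
           measure (PiM {..<n} (\<lambda>_. P)) A \<ge> 1 - \<delta> \<and>
           (\<forall>S\<in>A. robust_risk01 P B f \<le>
               (\<integral>\<^sup>+ x. (SUP x'\<in>B x. ennreal (loss01 (f x') (f x))) \<partial>(distr P borel fst))
               + ennreal (emp_risk01 n S f + rademacher_emp n S F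
                          + 3 * sqrt (ln (2 / \<delta>) / (2 * real n))))"
proof -
  note P = assms(1) and sP = assms(2) and fF = assms(4,5) and fm = assms(6)
     and gm1 = assms(7) and gm2 = assms(8) and n0 = assms(9) and d0 = assms(10) and d1 = assms(11)
  define L where "L z = loss01 (f (fst z)) (snd z)" for z :: "(real^'d) \<times> real"
  define M where "M = PiM {..<n} (\<lambda>_. P)"
  define X where "X i S = L (S i)" for i :: nat and S
  define t where "t = 3 * sqrt (ln (2 / \<delta>) / (2 * real n))"
  interpret P: prob_space P by (rule P)
  interpret M: prob_space M unfolding M_def by (intro prob_space_PiM P)
  have Lb: "L \<in> borel_measurable borel"
    unfolding L_def using fm by (rule L_meas)
  have Lm: "L \<in> borel_measurable P"
    using Lb measurable_cong_sets[OF sP refl] by blast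
  have L01: "L z \<in> {0..1}" for z by (simp add: L_def loss01_def)
  have Xm: "X i \<in> borel_measurable M" if "i < n" for i
    unfolding X_def M_def using that
    by (intro measurable_compose[OF _ Lm] measurable_component_singleton) auto
  have ind: "M.indep_vars (\<lambda>_. borel) X {..<n}"
  proof -
    have "M.indep_vars (\<lambda>_. P) (\<lambda>i \<omega>. \<omega> i) {..<n}"
      unfolding M_def using indep_components[OF P, of "{..<n}"] n0 by auto
    from M.indep_vars_compose2[OF this, of "\<lambda>_. L"] Lm show ?thesis
      unfolding X_def by auto
  qed
  have dX: "distr M borel (X i) = distr P borel L" if "i < n" for i
  proof -
    have "distr M borel (X i) = distr (distr M P (\<lambda>\<omega>. \<omega> i)) borel L"
      unfolding X_def M_def using that Lm
      by (subst distr_distr) (auto simp: comp_def)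
    also have "distr M P (\<lambda>\<omega>. \<omega> i) = P"
      unfolding M_def using that by (intro distr_PiM_component P) auto
    finally show ?thesis .
  qed
  interpret H: Hoeffding_ineq_iid M "{..<n}" X "X 0" 0 1 "M.expectation (X 0)"
  proof unfold_locales
    show "M.indep_vars (\<lambda>_. borel) X {..<n}" by (rule ind)
    show "i \<in> {..<n} \<Longrightarrow> distr M borel (X i) = distr M borel (X 0)" for i
      using dX n0 by auto
    show "X 0 \<in> borel_measurable M" using Xm n0 by auto
    show "AE x in M. X 0 x \<in> {0..1}" using L01 unfolding X_def by auto
  qed (auto simp: Pure.reflexive)
  define \<mu> where "\<mu> = M.expectation (X 0)"
  have tpos: "t \<ge> 0" unfolding t_def using d0 d1 by auto
  have hoef: "M.prob {S\<in>space M. (\<Sum>i\<in>{..<n}. X i S) / real (card {..<n}) \<le> \<mu> - t}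
      \<le> exp (-2 * real (card {..<n}) * t\<^sup>2 / (1 - 0)\<^sup>2)"
    unfolding \<mu>_def by (rule H.Hoeffding_ineq_le'[OF tpos]) (use n0 in auto)
  have ln_pos: "ln (2 / \<delta>) > 0" using d0 d1 by (simp add: ln_gt_zero_iff field_simps)
  have t2: "t\<^sup>2 = 9 * (ln (2 / \<delta>) / (2 * real n))"
    unfolding t_def using ln_pos n0 by (simp add: power_mult_distrib)
  have "exp (-2 * real (card {..<n}) * t\<^sup>2 / (1 - 0)\<^sup>2) = exp (- 9 * ln (2 / \<delta>))"
    using n0 by (simp add: t2 field_simps)
  also have "\<dots> \<le> exp (- ln (2 / \<delta>))" using ln_pos by simp
  also have "\<dots> = \<delta> / 2" proof - have "exp (ln (2 / \<delta>)) = 2 / \<delta>" using d0 by (intro exp_ln) simp then show ?thesis by (simp only: exp_minus) simp qed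
  finally have bad: "M.prob {S\<in>space M. (\<Sum>i\<in>{..<n}. X i S) / real (card {..<n}) \<le> \<mu> - t} \<le> \<delta>"
    using hoef d0 by linarith
  define A where "A = {S\<in>space M. \<mu> - t < (\<Sum>i<n. X i S) / real n}"
  have Xm': "X i \<in> borel_measurable M" if "i \<in> {..<n}" for i using Xm that by auto
  have Am: "A \<in> sets M"
    unfolding A_def using Xm' by measurable
  have Beq: "{S\<in>space M. (\<Sum>i\<in>{..<n}. X i S) / real (card {..<n}) \<le> \<mu> - t} = space M - A"
    unfolding A_def by auto
  have Bm: "space M - A \<in> sets M" using Am by auto
  have probA: "M.prob A \<ge> 1 - \<delta>"
  proof -
    have "M.prob (space M - (space M - A)) = 1 - M.prob (space M - A)"
      by (rule M.prob_compl[OF Bm])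
    moreover have "space M - (space M - A) = A" using sets.sets_into_space[OF Am] by auto
    ultimately show ?thesis using bad Beq by simp
  qed
  have mu_eq: "\<mu> = P.expectation L"
  proof -
    have Xm0: "X 0 \<in> borel_measurable M" using Xm n0 by blast
    have e1: "integral\<^sup>L (distr M borel (X 0)) (\<lambda>x. x) = integral\<^sup>L M (\<lambda>x. X 0 x)"
      by (rule integral_distr[OF Xm0]) simp
    have e2: "integral\<^sup>L (distr P borel L) (\<lambda>x. x) = integral\<^sup>L P (\<lambda>x. L x)"
      by (rule integral_distr[OF Lm]) simp
    have "\<mu> = integral\<^sup>L M (\<lambda>x. X 0 x)" unfolding \<mu>_def by (rule refl)
    also have "\<dots> = integral\<^sup>L (distr P borel L) (\<lambda>x. x)" unfolding e1[symmetric] dX[OF n0] ..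
    also have "\<dots> = P.expectation L" unfolding e2 ..
    finally show ?thesis .
  qed
  have Lint: "integrable P L"
    by (rule P.integrable_const_bound[where B=1]) (use L01 Lm in auto)
  have nnL: "(\<integral>\<^sup>+ z. ennreal (L z) \<partial>P) = ennreal \<mu>"
    unfolding mu_eq using Lint L01 by (subst nn_integral_eq_integral) auto
  define G where "G x = (SUP x'\<in>B x. ennreal (loss01 (f x') (f x)))" for x
  have fstb: "(fst :: (real^'d)\<times>real \<Rightarrow> real^'d) \<in> borel_measurable borel"
    by (intro borel_measurable_continuous_onI continuous_intros)
  have fstP: "(fst :: (real^'d)\<times>real \<Rightarrow> real^'d) \<in> borel_measurable P"
    using fstb measurable_cong_sets[OF sP refl] by blast
  have Gm: "G \<in> borel_measurable borel" unfolding G_def using gm2 .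
  have GfP: "(\<lambda>z. G (fst z)) \<in> borel_measurable P"
    by (rule measurable_compose[OF fstP Gm])
  have LmP: "(\<lambda>z. ennreal (L z)) \<in> borel_measurable P" using Lm by measurable
  have pw: "(SUP x'\<in>B (fst z). ennreal (loss01 (f x') (snd z))) \<le> G (fst z) + ennreal (L z)" for z
  proof (rule SUP_least)
    fix x' assume x': "x' \<in> B (fst z)"
    have r: "loss01 (f x') (snd z) \<le> loss01 (f x') (f (fst z)) + L z"
      unfolding L_def loss01_def by simp
    have "ennreal (loss01 (f x') (snd z)) \<le> ennreal (loss01 (f x') (f (fst z)) + L z)"
      by (rule ennreal_leI[OF r])
    also have "\<dots> = ennreal (loss01 (f x') (f (fst z))) + ennreal (L z)"
      by (rule ennreal_plus) (simp_all add: loss01_def L_def)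
    also have "\<dots> \<le> G (fst z) + ennreal (L z)"
      unfolding G_def by (intro add_right_mono SUP_upper x')
    finally show "ennreal (loss01 (f x') (snd z)) \<le> G (fst z) + ennreal (L z)" .
  qed
  have rr: "robust_risk01 P B f \<le> (\<integral>\<^sup>+ x. G x \<partial>distr P borel fst) + ennreal \<mu>"
  proof -
    have "robust_risk01 P B f \<le> (\<integral>\<^sup>+ z. (G (fst z) + ennreal (L z)) \<partial>P)"
      unfolding robust_risk01_def by (intro nn_integral_mono pw)
    also have "\<dots> = (\<integral>\<^sup>+ z. G (fst z) \<partial>P) + (\<integral>\<^sup>+ z. ennreal (L z) \<partial>P)"
      by (rule nn_integral_add[OF GfP LmP])
    also have "(\<integral>\<^sup>+ z. G (fst z) \<partial>P) = (\<integral>\<^sup>+ x. G x \<partial>distr P borel fst)"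
      by (rule nn_integral_distr[symmetric, OF fstP]) (simp add: Gm)
    finally show ?thesis using nnL by simp
  qed
  show ?thesis
  proof (intro bexI[of _ A] conjI ballI)
    show "A \<in> sets (PiM {..<n} (\<lambda>_. P))" using Am unfolding M_def .
    show "measure (PiM {..<n} (\<lambda>_. P)) A \<ge> 1 - \<delta>" using probA unfolding M_def .
    fix S assume S: "S \<in> A"
    have emp: "emp_risk01 n S f = (\<Sum>i<n. X i S) / real n"
      unfolding emp_risk01_def X_def L_def by simp
    have lt: "\<mu> - t < (\<Sum>i<n. X i S) / real n" using S unfolding A_def by blast
    have "\<mu> \<le> emp_risk01 n S f + rademacher_emp n S F + t"
      using lt rad_nonneg[OF fF, of n S] unfolding emp by linarith
    then have "ennreal \<mu> \<le> ennreal (emp_risk01 n S f + rademacher_emp n S F + t)"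
      by (rule ennreal_leI)
    then have "(\<integral>\<^sup>+ x. G x \<partial>distr P borel fst) + ennreal \<mu> \<le> (\<integral>\<^sup>+ x. G x \<partial>distr P borel fst) + ennreal (emp_risk01 n S f + rademacher_emp n S F + t)"
      by (rule add_left_mono)
    from order_trans[OF rr this] show "robust_risk01 P B f \<le>
               (\<integral>\<^sup>+ x. (SUP x'\<in>B x. ennreal (loss01 (f x') (f x))) \<partial>(distr P borel fst))
               + ennreal (emp_risk01 n S f + rademacher_emp n S F
                          + 3 * sqrt (ln (2 / \<delta>) / (2 * real n)))"
      unfolding G_def t_def .
  qed
qed

end
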